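(* Let $\alpha\in\mathbb C$ and $n\ge 1$ be an integer. The matrix $K_n:=A_\alpha^n-T\big((z+z^{-1})^n\big)$ is a (semi-infinite) Hankel matrix, i.e. its $(i,j)$ entry depends only on $i+j$. Moreover, its first column $k_n:=K_ne_1$ satisfies $$k_{n+1}=A_\alpha k_n+\sigma_n e_1,\qquad n\ge 1,$$ where $\sigma_n=\alpha\binom{n}{n/2}$ if $n$ is even and $\sigma_n=-\binom{n}{\lfloor n/2\rfloor}$ if $n$ is odd.
   Context: All matrices are semi-infinite, with rows and columns indexed by the positive integers, and $e_1$ denotes the first column of the semi-infinite identity matrix $I$. For a Laurent polynomial (or Laurent series with absolutely summable coefficients) $a(z)=\sum_{i\in\mathbb Z}a_iz^i$, $T(a)$ denotes the semi-infinite Toeplitz matrix with $(i,j)$ entry $a_{j-i}$. For $\alpha\in\mathbb C$, $A_\alpha:=T(z+z^{-1})+\alpha e_1e_1^T$, i.e. the semi-infinite tridiagonal matrix with ones on the sub- and superdiagonal, $(1,1)$ entry equal to $\alpha$, and zeros elsewhere. *)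

theory Defs
  imports "HOL-Analysis.Analysis" "HOL-Computational_Algebra.Formal_Laurent_Series"
begin

text \<open>We use functions on nat; only indices \<open>\<ge> 1\<close> are meaningful
  (the value at index 0 is ignored by every operation below).\<close>

type_synonym smat = "nat \<Rightarrow> nat \<Rightarrow> complex"
type_synonym svec = "nat \<Rightarrow> complex"

definition smat_mult :: "smat \<Rightarrow> smat \<Rightarrow> smat" where
  "smat_mult A B = (\<lambda>i j. infsum (\<lambda>k. A i k * B k j) {1..})"

definition smat_vec :: "smat \<Rightarrow> svec \<Rightarrow> svec" where
  "smat_vec A x = (\<lambda>i. infsum (\<lambda>k. A i k * x k) {1..})"

definition smat_id :: smat where
  "smat_id = (\<lambda>i j. if i = j then 1 else 0)"

primrec smat_pow :: "smat \<Rightarrow> nat \<Rightarrow> smat" where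
  "smat_pow A 0 = smat_id"
| "smat_pow A (Suc n) = smat_mult A (smat_pow A n)"

definition smat_diff :: "smat \<Rightarrow> smat \<Rightarrow> smat" where
  "smat_diff A B = (\<lambda>i j. A i j - B i j)"

definition e1 :: svec where
  "e1 = (\<lambda>i. if i = 1 then 1 else 0)"

definition toeplitz :: "complex fls \<Rightarrow> smat" where
  "toeplitz a = (\<lambda>i j. fls_nth a (int j - int i))"

definition zsym :: "complex fls" where
  "zsym = fls_X + fls_X_inv"

definition A_alpha :: "complex \<Rightarrow> smat" where
  "A_alpha \<alpha> = (\<lambda>i j. toeplitz zsym i j + \<alpha> * e1 i * e1 j)"

definition K_mat :: "complex \<Rightarrow> nat \<Rightarrow> smat" where
  "K_mat \<alpha> n = smat_diff (smat_pow (A_alpha \<alpha>) n) (toeplitz (zsym ^ n))"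

definition is_hankel :: "smat \<Rightarrow> bool" where
  "is_hankel M \<longleftrightarrow> (\<forall>i j i' j'. 1 \<le> i \<and> 1 \<le> j \<and> 1 \<le> i' \<and> 1 \<le> j' \<and> i + j = i' + j'
      \<longrightarrow> M i j = M i' j')"

definition sigma_coef :: "complex \<Rightarrow> nat \<Rightarrow> complex" where
  "sigma_coef \<alpha> n = (if even n then \<alpha> * of_nat (n choose (n div 2))
                 else - of_nat (n choose (n div 2)))"

end

theory Submission imports Defs begin

declare One_nat_def[simp del]

lemma infsum_fin_supp:
  assumes "finite F" "F \<subseteq> S" "\<And>x. x \<in> S - F \<Longrightarrow> f x = 0"
  shows "infsum f S = sum f F"
proof -
  have "infsum f S = infsum f F" using assms by (intro infsum_cong_neutral) auto
  thus ?thesis using assms(1) by simp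
qed

lemma A_entry:
  "A_alpha \<alpha> i k = (if k = i + 1 then 1 else 0) + (if k + 1 = i then 1 else 0)
     + (if i = 1 \<and> k = 1 then \<alpha> else 0)"
  unfolding A_alpha_def toeplitz_def zsym_def e1_def by auto

lemma A_row:
  assumes "i \<ge> 1"
  shows "infsum (\<lambda>k. A_alpha \<alpha> i k * x k) {1..} =
     (if i \<ge> 2 then x (i-1) else 0) + x (i+1) + (if i = 1 then \<alpha> * x 1 else 0)"
proof (cases "i = 1")
  case True
  have "infsum (\<lambda>k. A_alpha \<alpha> i k * x k) {1..} = (\<Sum>k\<in>{1,2}. A_alpha \<alpha> i k * x k)"
    by (rule infsum_fin_supp) (auto simp: A_entry True)
  also have "\<dots> = \<alpha> * x 1 + x 2" by (simp add: A_entry True)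
  finally show ?thesis using True by simp
next
  case False
  with assms have i2: "i \<ge> 2" by simp
  have "infsum (\<lambda>k. A_alpha \<alpha> i k * x k) {1..} = (\<Sum>k\<in>{i-1,i+1}. A_alpha \<alpha> i k * x k)"
    using i2 by (intro infsum_fin_supp) (auto simp: A_entry)
  also have "\<dots> = x (i-1) + x (i+1)" using i2 by (simp add: A_entry)
  finally show ?thesis using i2 by simp
qed

definition cc :: "nat \<Rightarrow> int \<Rightarrow> complex" where "cc n m = fls_nth (zsym ^ n) m"

lemma cc_0: "cc 0 m = (if m = 0 then 1 else 0)"
  unfolding cc_def by simp

lemma cc_Suc: "cc (Suc n) m = cc n (m - 1) + cc n (m + 1)"
  unfolding cc_def zsym_def
  by (simp add: distrib_right fls_X_times_conv_shift fls_X_inv_times_conv_shift)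

lemma cc_binom: "cc n (2*k - int n) = (if 0 \<le> k \<and> k \<le> int n then of_nat (n choose nat k) else 0)
   \<and> cc n (2*k - int n + 1) = 0"
proof (induction n arbitrary: k)
  case 0
  then show ?case by (simp add: cc_0)
next
  case (Suc n)
  have a: "cc (Suc n) (2*k - int (Suc n)) = cc n (2*(k-1) - int n) + cc n (2*k - int n)"
    by (simp add: cc_Suc algebra_simps)
  have b: "cc (Suc n) (2*k - int (Suc n) + 1) = cc n (2*(k-1) - int n + 1) + cc n (2*k - int n + 1)"
    by (simp add: cc_Suc algebra_simps)
  have "cc n (2*(k-1) - int n) + cc n (2*k - int n) = (if 0 \<le> k \<and> k \<le> int (Suc n) then of_nat (Suc n choose nat k) else 0)"
  proof (cases "k < 0")
    case True
    then show ?thesis using Suc.IH[of "k-1"] Suc.IH[of k] by simp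
  next
    case False
    then obtain m where m: "k = int m" using nonneg_int_cases by (metis linorder_not_le)
    show ?thesis
    proof (cases m)
      case 0
      then show ?thesis using Suc.IH[of "k-1"] Suc.IH[of k] m by simp
    next
      case (Suc m')
      have km: "k - 1 = int m'" "nat (int m') = m'" "nat k = Suc m'" using m Suc by simp_all
      have h1: "cc n (2*(k-1) - int n) = (if m' \<le> n then of_nat (n choose m') else 0)"
        using Suc.IH[of "k-1"] unfolding km by simp
      have h2: "cc n (2*k - int n) = (if Suc m' \<le> n then of_nat (n choose Suc m') else 0)"
        using Suc.IH[of k] unfolding km using m Suc by auto
      show ?thesis
      proof (cases "m' \<le> n")
        case True
        then have "of_nat (n choose m') + (if Suc m' \<le> n then of_nat (n choose Suc m') else 0)
            = (of_nat (Suc n choose Suc m') :: complex)"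
          by (cases "Suc m' \<le> n") (simp_all add: binomial_eq_0)
        then show ?thesis unfolding h1 h2 km(3) using True m Suc by simp
      next
        case False
        then show ?thesis unfolding h1 h2 km(3) using m Suc by simp
      qed
    qed
  qed
  then show ?case using a b Suc.IH[of "k-1"] Suc.IH[of k] by simp
qed

lemma cc_0_val: "cc n 0 = (if even n then of_nat (n choose (n div 2)) else 0)"
proof (cases "even n")
  case True
  then obtain q where q: "n = 2*q" by blast
  show ?thesis using cc_binom[of n "int q"] q by simp
next
  case False
  then obtain q where q: "n = 2*q+1" using oddE by blast
  show ?thesis using cc_binom[of n "int q"] q by simp
qed

lemma cc_1_val: "cc n 1 = (if even n then 0 else of_nat (n choose (n div 2)))"
proof (cases "even n")
  case True
  then obtain q where q: "n = 2*q" by blast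
  show ?thesis using cc_binom[of n "int q"] q by simp
next
  case False
  then obtain q where q: "n = 2*q+1" using oddE by blast
  have "n choose (q+1) = n choose q" using q binomial_symmetric[of q n] by simp
  moreover have "nat (int q + 1) = q + 1" by simp
  ultimately show ?thesis using cc_binom[of n "int q + 1"] q False by simp
qed


lemma K_eq: "K_mat \<alpha> n i j = smat_pow (A_alpha \<alpha>) n i j - cc n (int j - int i)"
  unfolding K_mat_def smat_diff_def toeplitz_def cc_def by simp

lemma M_Suc:
  assumes "i \<ge> 1"
  shows "smat_pow (A_alpha \<alpha>) (Suc n) i j = (if i \<ge> 2 then smat_pow (A_alpha \<alpha>) n (i-1) j else 0)
     + smat_pow (A_alpha \<alpha>) n (i+1) j + (if i = 1 then \<alpha> * smat_pow (A_alpha \<alpha>) n 1 j else 0)"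
  using A_row[OF assms, of \<alpha> "\<lambda>k. smat_pow (A_alpha \<alpha>) n k j"]
  by (simp add: smat_mult_def)

lemma M_Suc1: "smat_pow (A_alpha \<alpha>) (Suc n) 1 j = smat_pow (A_alpha \<alpha>) n 2 j + \<alpha> * smat_pow (A_alpha \<alpha>) n 1 j"
proof -
  have e: "(1::nat) + 1 = 2" by simp
  show ?thesis using M_Suc[of 1 \<alpha> n j] unfolding e by (simp del: smat_pow.simps)
qed

declare smat_pow.simps(2)[simp del]

lemma K_Suc:
  assumes "i \<ge> 2"
  shows "K_mat \<alpha> (Suc n) i j = K_mat \<alpha> n (i-1) j + K_mat \<alpha> n (i+1) j"
proof -
  have "int j - int (i - 1) = int j - int i + 1" using assms by simp
  then show ?thesis using assms by (simp add: K_eq M_Suc cc_Suc algebra_simps)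
qed

lemma K_Suc1: "K_mat \<alpha> (Suc n) 1 j = K_mat \<alpha> n 2 j + \<alpha> * K_mat \<alpha> n 1 j + \<alpha> * cc n (int j - 1) - cc n (int j)"
  unfolding K_eq M_Suc1 by (simp add: cc_Suc algebra_simps)

lemma K_Suc2: "K_mat \<alpha> (Suc n) 2 j = K_mat \<alpha> n 1 j + K_mat \<alpha> n 3 j"
proof -
  have e: "(2::nat) + 1 = 3" "(2::nat) - 1 = 1" by simp_all
  show ?thesis using K_Suc[of 2 \<alpha> n j] unfolding e by simp
qed

lemma lin_aux:
  fixes S0 S1 C1 C2 p q a b d c0 c1 c2 cm1 cm2 \<alpha> :: complex
  assumes "S0 = p + \<alpha>*a" "p = b - c0 + cm2" "S1 = q + \<alpha>*b" "q = d - c1 + cm1"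
    "C1 = cm2 + c0" "C2 = c0 + c2" "a - cm1 + c1 = \<alpha>*b" "b - c0 + c2 = \<alpha>*d"
  shows "S0 - C1 + C2 = \<alpha>*S1"
proof -
  have "S0 - C1 + C2 = (b - c0 + c2) + \<alpha>*a" using assms(1,2,5,6) by (simp add: algebra_simps)
  also have "\<dots> = \<alpha>*d + \<alpha>*a" using assms(8) by simp
  also have "\<dots> = \<alpha>*d + \<alpha>*(\<alpha>*b - c1 + cm1)"
  proof -
    have "a = \<alpha>*b - c1 + cm1" using assms(7) by (simp add: algebra_simps)
    thus ?thesis by simp
  qed
  also have "\<dots> = \<alpha>*S1"
  proof -
    have s: "S1 = d - c1 + cm1 + \<alpha>*b" using assms(3,4) by simp
    show ?thesis unfolding s by (simp add: algebra_simps)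
  qed
  finally show ?thesis .
qed

lemma invariant:
  "(\<forall>i\<ge>1. \<forall>j\<ge>2. K_mat \<alpha> n i j = K_mat \<alpha> n (Suc i) (j-1)) \<and>
   (\<forall>j\<ge>1. smat_pow (A_alpha \<alpha>) n 1 j - cc n (int j - 1) + cc n (int j + 1) = \<alpha> * smat_pow (A_alpha \<alpha>) n 1 (j+1))"
proof (induction n)
  case 0
  show ?case by (auto simp: K_eq smat_id_def cc_0)
next
  case (Suc n)
  let ?M = "smat_pow (A_alpha \<alpha>) n"
  let ?K = "K_mat \<alpha> n"
  have Q: "\<And>i j. i \<ge> 1 \<Longrightarrow> j \<ge> 2 \<Longrightarrow> ?K i j = ?K (Suc i) (j-1)" using Suc.IH by blast
  have B: "\<And>j. j \<ge> 1 \<Longrightarrow> ?M 1 j - cc n (int j - 1) + cc n (int j + 1) = \<alpha> * ?M 1 (j+1)"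
    using Suc.IH by blast
  have Q1: "\<forall>i\<ge>1. \<forall>j\<ge>2. K_mat \<alpha> (Suc n) i j = K_mat \<alpha> (Suc n) (Suc i) (j-1)"
  proof (intro allI impI)
    fix i j :: nat assume i: "i \<ge> 1" and j: "j \<ge> 2"
    show "K_mat \<alpha> (Suc n) i j = K_mat \<alpha> (Suc n) (Suc i) (j-1)"
    proof (cases "i = 1")
      case True
      have b: "?M 1 (j-1) - cc n (int (j-1) - 1) + cc n (int (j-1) + 1) = \<alpha> * ?M 1 (j-1+1)"
        using B[of "j-1"] j by simp
      have ij: "int (j-1) = int j - 1" "j - 1 + 1 = j" using j by auto
      have b': "?K 1 (j-1) + cc n (int j) = \<alpha> * (?K 1 j + cc n (int j - 1))"
        using b unfolding ij K_eq[of \<alpha> n 1 "j-1"] K_eq[of \<alpha> n 1 j] by (simp add: ij algebra_simps)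
      have q: "?K 2 j = ?K 3 (j-1)" using Q[of 2 j] j by simp
      have "K_mat \<alpha> (Suc n) 1 j = K_mat \<alpha> (Suc n) 2 (j-1)"
        unfolding K_Suc1 K_Suc2 using q b' by (simp add: algebra_simps)
      then show ?thesis using True by simp
    next
      case False
      with i have i2: "i \<ge> 2" by simp
      have "K_mat \<alpha> (Suc n) i j = ?K (i-1) j + ?K (i+1) j" using K_Suc[of i] i2 by simp
      moreover have "K_mat \<alpha> (Suc n) (Suc i) (j-1) = ?K i (j-1) + ?K (i+2) (j-1)"
      proof -
        have e: "Suc i + 1 = i + 2" "Suc i - 1 = i" by simp_all
        show ?thesis using K_Suc[of "Suc i" \<alpha> n "j-1"] i2 unfolding e by simp
      qed
      moreover have "?K (i-1) j = ?K i (j-1)" using Q[of "i-1" j] i2 j by simp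
      moreover have "?K (i+1) j = ?K (i+2) (j-1)"
      proof -
        have e: "Suc (i+1) = i + 2" by simp
        show ?thesis using Q[of "i+1" j] j unfolding e by simp
      qed
      ultimately show ?thesis by simp
    qed
  qed
  have B1: "\<forall>j\<ge>1. smat_pow (A_alpha \<alpha>) (Suc n) 1 j - cc (Suc n) (int j - 1) + cc (Suc n) (int j + 1)
       = \<alpha> * smat_pow (A_alpha \<alpha>) (Suc n) 1 (j+1)"
  proof (intro allI impI)
    fix j :: nat assume j: "j \<ge> 1"
    have M2: "\<And>j. j \<ge> 1 \<Longrightarrow> ?M 2 j = ?M 1 (j+1) - cc n (int j) + cc n (int j - 2)"
    proof -
      fix j :: nat assume "j \<ge> 1"
      hence "?K 1 (j+1) = ?K 2 j" using Q[of 1 "j+1"] by simp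
      thus "?M 2 j = ?M 1 (j+1) - cc n (int j) + cc n (int j - 2)" by (simp add: K_eq algebra_simps)
    qed
    have S: "\<And>j. j \<ge> 1 \<Longrightarrow> smat_pow (A_alpha \<alpha>) (Suc n) 1 j = ?M 2 j + \<alpha> * ?M 1 j"
      using M_Suc1 by simp
    have c1: "cc (Suc n) (int j - 1) = cc n (int j - 2) + cc n (int j)" by (simp add: cc_Suc ac_simps)
    have c2: "cc (Suc n) (int j + 1) = cc n (int j) + cc n (int j + 2)" by (simp add: cc_Suc ac_simps)
    have c3: "cc (Suc n) (int j) = cc n (int j - 1) + cc n (int j + 1)" by (simp add: cc_Suc ac_simps)
    have b0: "?M 1 j - cc n (int j - 1) + cc n (int j + 1) = \<alpha> * ?M 1 (j+1)" using B j by blast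
    have e: "int (j+1) = int j + 1" "int j + 1 - 1 = int j" "int j + 1 + 1 = int j + 2" "j+1+1 = j+2"
       "int j + 1 - 2 = int j - 1" by simp_all
    have b1: "?M 1 (j+1) - cc n (int j) + cc n (int j + 2) = \<alpha> * ?M 1 (j+2)"
    proof -
      have "?M 1 (j+1) - cc n (int (j+1) - 1) + cc n (int (j+1) + 1) = \<alpha> * ?M 1 (j+1+1)"
        by (rule B) simp
      from this[unfolded e] show ?thesis .
    qed
    have f4: "?M 2 (j+1) = ?M 1 (j+2) - cc n (int j + 1) + cc n (int j - 1)"
      using M2[of "j+1", OF le_add2] unfolding e .
    show "smat_pow (A_alpha \<alpha>) (Suc n) 1 j - cc (Suc n) (int j - 1) + cc (Suc n) (int j + 1)
       = \<alpha> * smat_pow (A_alpha \<alpha>) (Suc n) 1 (j+1)"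
      by (rule lin_aux[OF S[OF j] M2[OF j] S[of "j+1", OF le_add2] f4 c1 c2 b0 b1])
  qed
  show ?case using Q1 B1 by blast
qed

lemma hankel_shift:
  assumes "\<forall>i\<ge>1. \<forall>j\<ge>2. K i j = K (Suc i) (j-1)"
  shows "i \<ge> 1 \<Longrightarrow> j \<ge> 1 \<Longrightarrow> K i (j+d) = K (i+d) j"
proof (induction d arbitrary: i)
  case 0 then show ?case by simp
next
  case (Suc d)
  have "K i (j + Suc d) = K (Suc i) (j + d)" using assms Suc.prems by auto
  also have "\<dots> = K (Suc i + d) j" using Suc.IH[of "Suc i"] Suc.prems by simp
  finally show ?case by simp
qed

lemma vec_e1: "smat_vec M e1 i = M i 1"
proof -
  have "smat_vec M e1 i = (\<Sum>k\<in>{1}. M i k * e1 k)"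
    unfolding smat_vec_def by (rule infsum_fin_supp) (auto simp: e1_def)
  thus ?thesis by (simp add: e1_def)
qed

theorem lemma1:
  fixes \<alpha> :: complex and n :: nat
  assumes "n \<ge> 1"
  shows "is_hankel (K_mat \<alpha> n) \<and>
         (\<forall>i\<ge>1. smat_vec (K_mat \<alpha> (Suc n)) e1 i
                  = smat_vec (A_alpha \<alpha>) (smat_vec (K_mat \<alpha> n) e1) i + sigma_coef \<alpha> n * e1 i)"
proof
  have Q: "\<forall>i\<ge>1. \<forall>j\<ge>2. K_mat \<alpha> n i j = K_mat \<alpha> n (Suc i) (j-1)" using invariant by blast
  show "is_hankel (K_mat \<alpha> n)"
    unfolding is_hankel_def
  proof (intro allI impI)
    fix i j i' j' :: nat assume h: "1 \<le> i \<and> 1 \<le> j \<and> 1 \<le> i' \<and> 1 \<le> j' \<and> i + j = i' + j'"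
    show "K_mat \<alpha> n i j = K_mat \<alpha> n i' j'"
    proof (cases "j' \<le> j")
      case True
      then obtain d where "j = j' + d" using le_Suc_ex by blast
      with h have "i' = i + d" by simp
      then show ?thesis using hankel_shift[OF Q, of i j' d] h \<open>j = j' + d\<close> by simp
    next
      case False
      then obtain d where "j' = j + d" by (metis le_Suc_ex nat_le_linear)
      with h have "i = i' + d" by simp
      then show ?thesis using hankel_shift[OF Q, of i' j d] h \<open>j' = j + d\<close> by simp
    qed
  qed
  show "\<forall>i\<ge>1. smat_vec (K_mat \<alpha> (Suc n)) e1 i
                  = smat_vec (A_alpha \<alpha>) (smat_vec (K_mat \<alpha> n) e1) i + sigma_coef \<alpha> n * e1 i"
  proof (intro allI impI)
    fix i :: nat assume i: "i \<ge> 1"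
    have r: "smat_vec (A_alpha \<alpha>) (smat_vec (K_mat \<alpha> n) e1) i =
      (if i \<ge> 2 then K_mat \<alpha> n (i-1) 1 else 0) + K_mat \<alpha> n (i+1) 1 + (if i = 1 then \<alpha> * K_mat \<alpha> n 1 1 else 0)"
      unfolding smat_vec_def[of "A_alpha \<alpha>"] vec_e1 by (rule A_row[OF i, of \<alpha> "\<lambda>k. K_mat \<alpha> n k 1"])
    show "smat_vec (K_mat \<alpha> (Suc n)) e1 i
                  = smat_vec (A_alpha \<alpha>) (smat_vec (K_mat \<alpha> n) e1) i + sigma_coef \<alpha> n * e1 i"
    proof (cases "i = 1")
      case True
      have "smat_vec (K_mat \<alpha> (Suc n)) e1 1 = K_mat \<alpha> (Suc n) 1 1" by (rule vec_e1)
      also have "\<dots> = K_mat \<alpha> n 2 1 + \<alpha> * K_mat \<alpha> n 1 1 + \<alpha> * cc n 0 - cc n 1"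
        using K_Suc1[of \<alpha> n 1] by simp
      also have "\<dots> = smat_vec (A_alpha \<alpha>) (smat_vec (K_mat \<alpha> n) e1) 1 + sigma_coef \<alpha> n * e1 1"
        using r unfolding True by (simp add: e1_def sigma_coef_def cc_0_val cc_1_val algebra_simps)
      finally show ?thesis unfolding True .
    next
      case False
      with i have "i \<ge> 2" by simp
      then show ?thesis unfolding r vec_e1 K_Suc[OF \<open>i \<ge> 2\<close>] by (simp add: e1_def)
    qed
  qed
qed

end
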